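(* Let $n\ge 2$ and let $A\subset S^n=\{x\in\mathbb R^{n+1}:\|x\|=1\}$ be a closed subset with $0<\mathrm{diam}(A)\le 1$ (diameter with respect to the Euclidean metric). Then there is an isometry $f\in\mathsf{SO}(n+1)$ such that the family $\{A,f(A),f^2(A)\}$ is linked but not centered, i.e. any two of $A,f(A),f^2(A)$ intersect but $A\cap f(A)\cap f^2(A)=\emptyset$.
   Context: $\mathsf{SO}(n+1)$ denotes the group of orientation-preserving linear isometries of $\mathbb R^{n+1}$. A family of sets is linked if any two members intersect, and centered if every finite subfamily has nonempty intersection. *)

theory Defs
  imports "HOL-Analysis.Analysis"
begin

definition SO :: "((real^'n) \<Rightarrow> (real^'n)) set" where
  "SO = {f. orthogonal_transformation f \<and> det (matrix f) = 1}"

definition unit_sphere :: "(real^'n) set" where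
  "unit_sphere = {x. norm x = 1}"

end

theory Submission
  imports Defs
begin


definition rot :: "real^'n \<Rightarrow> real^'n \<Rightarrow> real^'n \<Rightarrow> real^'n" where
  "rot a b x = x + ((-3/2)*(x\<bullet>a) - (sqrt 3/2)*(x\<bullet>b)) *\<^sub>R a + ((sqrt 3/2)*(x\<bullet>a) - (3/2)*(x\<bullet>b)) *\<^sub>R b"

lemma s3: "sqrt 3 * sqrt 3 = (3::real)" by simp


context
  fixes a b :: "real^'n"
  assumes aa: "a \<bullet> a = 1" and bb: "b \<bullet> b = 1" and ab: "a \<bullet> b = 0"
begin

lemma ba: "b \<bullet> a = 0" using ab by (simp add: inner_commute)

lemma rot_a: "rot a b x \<bullet> a = -(x\<bullet>a)/2 - (sqrt 3/2)*(x\<bullet>b)"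
  unfolding rot_def by (simp add: inner_add_left aa ba algebra_simps)

lemma rot_b: "rot a b x \<bullet> b = (sqrt 3/2)*(x\<bullet>a) - (x\<bullet>b)/2"
  unfolding rot_def by (simp add: inner_add_left bb ab algebra_simps)

lemma rot_alt: "rot a b x = x + (x \<bullet> ((-3/2) *\<^sub>R a - (sqrt 3/2) *\<^sub>R b)) *\<^sub>R a + (x \<bullet> ((sqrt 3/2) *\<^sub>R a - (3/2) *\<^sub>R b)) *\<^sub>R b"
  unfolding rot_def by (simp add: inner_diff_right)

lemma lin_gen: "linear (\<lambda>x. x + (x \<bullet> U) *\<^sub>R (A::real^'n) + (x \<bullet> V) *\<^sub>R B)"
  by (rule linearI) (simp_all add: inner_add_left scaleR_add_left algebra_simps)

lemma rot_linear: "linear (rot a b)"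
  unfolding rot_alt[abs_def] by (rule lin_gen)

lemma rot_norm: "norm (rot a b x) = norm x"
proof -
  have "rot a b x \<bullet> rot a b x = x \<bullet> x"
    unfolding rot_def
    apply (simp add: inner_add_left inner_add_right aa bb ab ba algebra_simps inner_commute[of a x] inner_commute[of b x])
    done
  then show ?thesis by (simp add: norm_eq_sqrt_inner)
qed

lemma rot_comb: "\<exists>c1 c2. rot a b x = x + c1 *\<^sub>R a + c2 *\<^sub>R b"
  unfolding rot_def by blast

lemma comb_eq:
  assumes "y = x + c1 *\<^sub>R a + c2 *\<^sub>R b" "y \<bullet> a = x \<bullet> a" "y \<bullet> b = x \<bullet> b"
  shows "y = x"
proof -
  have "c1 = 0" using assms(1,2) by (simp add: inner_add_left aa ba)
  moreover have "c2 = 0" using assms(1,3) by (simp add: inner_add_left bb ab)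
  ultimately show ?thesis using assms(1) by simp
qed

lemma rot3: "rot a b (rot a b (rot a b x)) = x"
proof -
  let ?r = "rot a b"
  obtain c1 c2 where 1: "?r x = x + c1 *\<^sub>R a + c2 *\<^sub>R b" using rot_comb by blast
  obtain d1 d2 where 2: "?r (?r x) = ?r x + d1 *\<^sub>R a + d2 *\<^sub>R b" using rot_comb by blast
  obtain e1 e2 where 3: "?r (?r (?r x)) = ?r (?r x) + e1 *\<^sub>R a + e2 *\<^sub>R b" using rot_comb by blast
  have "?r (?r (?r x)) = x + (c1+d1+e1) *\<^sub>R a + (c2+d2+e2) *\<^sub>R b"
    using 1 2 3 by (simp add: algebra_simps scaleR_add_left)
  moreover have "?r (?r (?r x)) \<bullet> a = x \<bullet> a"
    unfolding rot_a rot_b by (simp add: field_simps) (simp add: algebra_simps)?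
  moreover have "?r (?r (?r x)) \<bullet> b = x \<bullet> b"
    unfolding rot_a rot_b by (simp add: field_simps) (simp add: algebra_simps)?
  ultimately show ?thesis by (rule comb_eq)
qed

lemma rot_sum_a: "x \<bullet> a + rot a b x \<bullet> a + rot a b (rot a b x) \<bullet> a = 0"
  unfolding rot_a rot_b by (simp add: field_simps) (simp add: algebra_simps)?
lemma rot_sum_b: "x \<bullet> b + rot a b x \<bullet> b + rot a b (rot a b x) \<bullet> b = 0"
  unfolding rot_a rot_b by (simp add: field_simps) (simp add: algebra_simps)?

lemma rot_SO: "rot a b \<in> SO"
proof -
  have ot: "orthogonal_transformation (rot a b)"
    using rot_linear rot_norm by (simp add: orthogonal_transformation)
  let ?M = "matrix (rot a b)"
  have lin: "linear (rot a b)" by (rule rot_linear)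
  have "rot a b = (rot a b \<circ> rot a b) \<circ> (rot a b \<circ> rot a b)"
    by (rule ext) (simp add: rot3)
  hence "?M = matrix (rot a b \<circ> rot a b) ** matrix (rot a b \<circ> rot a b)"
    by (metis lin linear_compose matrix_compose)
  hence "det ?M = det (matrix (rot a b \<circ> rot a b)) * det (matrix (rot a b \<circ> rot a b))"
    by (simp add: det_mul)
  hence "det ?M \<ge> 0" by simp
  moreover have "\<bar>det ?M\<bar> = 1" using ot by simp
  ultimately have "det ?M = 1" by simp
  with ot show ?thesis unfolding SO_def by simp
qed

end

lemma rot_exists:
  fixes p q e :: "real^'n"
  assumes p1: "norm p = 1" and q1: "norm q = 1" and pq: "p \<noteq> q"
    and pos: "p \<bullet> e + q \<bullet> e > 0"
    and eq: "(norm (p - q))^2 * (e \<bullet> e) = 3 * (p \<bullet> e + q \<bullet> e)^2 + (p \<bullet> e - q \<bullet> e)^2"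
  shows "\<exists>f\<in>SO. f p = q \<and> (\<forall>x. f (f (f x)) = x) \<and> (\<forall>x. e \<bullet> x + e \<bullet> f x + e \<bullet> f (f x) = 0)"
proof -
  define d where "d = norm (p - q)"
  define \<alpha> where "\<alpha> = p \<bullet> e"
  define \<beta> where "\<beta> = q \<bullet> e"
  have dpos: "d > 0" using pq by (simp add: d_def)
  have pp: "p \<bullet> p = 1" using p1 by (simp add: norm_eq_1)
  have qq: "q \<bullet> q = 1" using q1 by (simp add: norm_eq_1)
  have d2: "d^2 = 2 - 2 * (p \<bullet> q)"
    unfolding d_def power2_norm_eq_inner by (simp add: inner_diff_left inner_diff_right pp qq inner_commute)
  define a where "a = (1/d) *\<^sub>R (p - q)"
  have aa: "a \<bullet> a = 1" unfolding a_def using dpos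
    by (simp add: d_def power2_norm_eq_inner[symmetric] power2_eq_square)
  have pa: "p \<bullet> a = d/2" unfolding a_def using dpos d2
    by (simp add: inner_diff_right pp field_simps power2_eq_square)
  have qa: "q \<bullet> a = -d/2" unfolding a_def using dpos d2
    by (simp add: inner_diff_right qq field_simps power2_eq_square inner_commute)
  have ea: "e \<bullet> a = (\<alpha> - \<beta>)/d" unfolding a_def \<alpha>_def \<beta>_def
    by (simp add: inner_diff_right inner_commute diff_divide_distrib)
  define w where "w = e - (e \<bullet> a) *\<^sub>R a"
  define N where "N = norm w"
  have wa: "w \<bullet> a = 0" unfolding w_def by (simp add: inner_diff_left aa)
  have ww: "w \<bullet> w = e \<bullet> e - (e \<bullet> a)^2"
    unfolding w_def by (simp add: inner_diff_left inner_diff_right aa inner_commute power2_eq_square)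
  have pw: "p \<bullet> w = (\<alpha> + \<beta>)/2" unfolding w_def using pa ea dpos
    by (simp add: inner_diff_right \<alpha>_def field_simps)
  have qw: "q \<bullet> w = (\<alpha> + \<beta>)/2" unfolding w_def using qa ea dpos
    by (simp add: inner_diff_right \<beta>_def field_simps)
  have abpos: "\<alpha> + \<beta> > 0" using pos by (simp add: \<alpha>_def \<beta>_def)
  have "d^2 * N^2 = 3 * (\<alpha>+\<beta>)^2"
  proof -
    have "N^2 = e \<bullet> e - (e \<bullet> a)^2" unfolding N_def power2_norm_eq_inner ww ..
    hence "d^2 * N^2 = d^2 * (e \<bullet> e) - (\<alpha> - \<beta>)^2"
      using dpos by (simp add: ea field_simps power2_eq_square)
    thus ?thesis using eq by (simp add: d_def \<alpha>_def \<beta>_def)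
  qed
  hence "(d * N)^2 = (sqrt 3 * (\<alpha>+\<beta>))^2" by (simp add: power_mult_distrib)
  hence dN: "d * N = sqrt 3 * (\<alpha>+\<beta>)"
    using dpos abpos by (subst (asm) power2_eq_iff_nonneg) (auto simp: N_def)
  have "d * N > 0" unfolding dN using abpos by simp
  hence Npos: "N > 0" using dpos by (simp add: zero_less_mult_iff)
  have dN3: "sqrt 3 * d * N = 3 * (\<alpha> + \<beta>)"
  proof -
    have "sqrt 3 * (d * N) = sqrt 3 * sqrt 3 * (\<alpha> + \<beta>)" unfolding dN by (simp only: mult.assoc)
    thus ?thesis by (simp add: mult.assoc)
  qed
  have key: "(\<alpha> + \<beta>) / (2 * N) = d * sqrt 3 / 6"
    using Npos dN3 by (simp add: divide_simps) (simp add: algebra_simps)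
  define b where "b = (1/N) *\<^sub>R w"
  have bb: "b \<bullet> b = 1" unfolding b_def using Npos
    by (simp add: N_def power2_norm_eq_inner[symmetric] power2_eq_square)
  have ab: "a \<bullet> b = 0" unfolding b_def using wa by (simp add: inner_commute)
  have pb: "p \<bullet> b = d * sqrt 3 / 6"
  proof -
    have "p \<bullet> b = (\<alpha> + \<beta>) / (2 * N)" unfolding b_def inner_scaleR_right pw by simp
    also have "\<dots> = d * sqrt 3 / 6" by (rule key)
    finally show ?thesis .
  qed
  have qb: "q \<bullet> b = d * sqrt 3 / 6"
  proof -
    have "q \<bullet> b = (\<alpha> + \<beta>) / (2 * N)" unfolding b_def inner_scaleR_right qw by simp
    also have "\<dots> = d * sqrt 3 / 6" by (rule key)
    finally show ?thesis .
  qed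
  have e_dec: "e = (e \<bullet> a) *\<^sub>R a + N *\<^sub>R b"
    unfolding b_def using Npos by (simp add: w_def)
  have fp: "rot a b p = q"
  proof -
    have c1: "(-3/2)*(p\<bullet>a) - (sqrt 3/2)*(p\<bullet>b) = -d"
      unfolding pa pb by (simp add: field_simps)
    have c2: "(sqrt 3/2)*(p\<bullet>a) - (3/2)*(p\<bullet>b) = 0"
      unfolding pa pb by (simp add: field_simps)
    have "rot a b p = p + ((-3/2)*(p\<bullet>a) - (sqrt 3/2)*(p\<bullet>b)) *\<^sub>R a + ((sqrt 3/2)*(p\<bullet>a) - (3/2)*(p\<bullet>b)) *\<^sub>R b"
      by (simp only: rot_def)
    also have "\<dots> = p - d *\<^sub>R a" unfolding c1 c2 by simp
    also have "\<dots> = q" unfolding a_def using dpos by simp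
    finally show ?thesis .
  qed
  have SO: "rot a b \<in> SO" by (rule rot_SO[OF aa bb ab])
  have "\<forall>x. rot a b (rot a b (rot a b x)) = x" using rot3[OF aa bb ab] by blast
  moreover have "\<forall>x. e \<bullet> x + e \<bullet> rot a b x + e \<bullet> rot a b (rot a b x) = 0"
  proof
    fix x
    have "\<And>z. e \<bullet> z = (e \<bullet> a) * (z \<bullet> a) + N * (z \<bullet> b)"
    proof -
      fix z
      have "e \<bullet> z = ((e \<bullet> a) *\<^sub>R a + N *\<^sub>R b) \<bullet> z"
        by (rule arg_cong[where f="\<lambda>v. v \<bullet> z"], rule e_dec)
      thus "e \<bullet> z = (e \<bullet> a) * (z \<bullet> a) + N * (z \<bullet> b)"
        by (simp only: inner_add_left inner_scaleR_left inner_commute[of a z] inner_commute[of b z])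
    qed
    note h = this[of x] this[of "rot a b x"] this[of "rot a b (rot a b x)"]
    have "e \<bullet> x + e \<bullet> rot a b x + e \<bullet> rot a b (rot a b x) =
       (e \<bullet> a) * (x \<bullet> a + rot a b x \<bullet> a + rot a b (rot a b x) \<bullet> a) + N * (x \<bullet> b + rot a b x \<bullet> b + rot a b (rot a b x) \<bullet> b)"
      unfolding h by (simp add: algebra_simps)
    thus "e \<bullet> x + e \<bullet> rot a b x + e \<bullet> rot a b (rot a b x) = 0"
      by (simp only: rot_sum_a[OF aa bb ab, of x] rot_sum_b[OF aa bb ab, of x])
  qed
  ultimately show ?thesis using SO fp by blast
qed



lemma cone_step:
  fixes A :: "(real^'n) set" and p v w :: "real^'n"
  assumes H: "\<And>x. x \<in> A \<Longrightarrow> x \<noteq> p \<Longrightarrow> (norm (x - p))^2 * (v \<bullet> v) \<le> 4 * (x \<bullet> v)^2"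
    and vp: "v \<bullet> p = 0" and vA: "\<forall>x\<in>A. 0 \<le> x \<bullet> v"
    and wp: "w \<bullet> p = 0" and wv: "norm (w - v) \<le> norm v / 2"
  shows "\<forall>x\<in>A. 0 \<le> x \<bullet> w"
proof
  fix x assume xA: "x \<in> A"
  show "0 \<le> x \<bullet> w"
  proof (cases "x = p")
    case True thus ?thesis using wp by (simp add: inner_commute)
  next
    case False
    have hx: "(norm (x - p))^2 * (v \<bullet> v) \<le> 4 * (x \<bullet> v)^2" by (rule H[OF xA False])
    have e1: "(norm (x - p) * norm v)^2 = (norm (x - p))^2 * (v \<bullet> v)"
      by (simp only: power_mult_distrib power2_norm_eq_inner[of v])
    have e2: "(2 * (x \<bullet> v))^2 = 4 * (x \<bullet> v)^2" by (simp add: power_mult_distrib)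
    have xv: "0 \<le> x \<bullet> v" using vA xA by blast
    have "(norm (x - p) * norm v)^2 \<le> (2 * (x \<bullet> v))^2" unfolding e1 e2 by (rule hx)
    hence 1: "norm (x - p) * norm v \<le> 2 * (x \<bullet> v)"
      by (rule power2_le_imp_le) (simp add: xv)
    have 2: "x \<bullet> w = x \<bullet> v + (x - p) \<bullet> (w - v)"
      using vp wp by (simp add: inner_diff_left inner_diff_right inner_commute)
    have cs: "(x - p) \<bullet> (v - w) \<le> norm (x - p) * norm (v - w)" by (rule norm_cauchy_schwarz)
    have 3: "- ((x - p) \<bullet> (w - v)) = (x - p) \<bullet> (v - w)" by (simp add: inner_diff_right)
    have 4: "norm (v - w) = norm (w - v)" by (rule norm_minus_commute)
    have "norm (x - p) * norm (w - v) \<le> norm (x - p) * (norm v / 2)"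
      by (rule mult_left_mono[OF wv]) simp
    hence "- ((x - p) \<bullet> (w - v)) \<le> norm (x - p) * norm v / 2" using cs 3 4 by simp
    thus ?thesis using 1 2 by linarith
  qed
qed

lemma cone_path:
  fixes A :: "(real^'n) set" and p u z :: "real^'n"
  assumes H: "\<And>x v. x \<in> A \<Longrightarrow> x \<noteq> p \<Longrightarrow> v \<bullet> p = 0 \<Longrightarrow> (\<forall>y\<in>A. 0 \<le> y \<bullet> v) \<Longrightarrow> (norm (x - p))^2 * (v \<bullet> v) \<le> 4 * (x \<bullet> v)^2"
    and up: "u \<bullet> p = 0" and zp: "z \<bullet> p = 0" and uu: "u \<bullet> u = 1" and zz: "z \<bullet> z = 1" and uz: "u \<bullet> z = 0"
    and uA: "\<forall>x\<in>A. 0 \<le> x \<bullet> u"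
  shows "\<forall>x\<in>A. 0 \<le> x \<bullet> z"
proof -
  define V where "V t = (1 - t) *\<^sub>R u + t *\<^sub>R z" for t :: real
  have step: "\<forall>x\<in>A. 0 \<le> x \<bullet> V (t + 1/4)" if "\<forall>x\<in>A. 0 \<le> x \<bullet> V t" for t
  proof (rule cone_step[where v = "V t" and p = p])
    show "\<And>x. x \<in> A \<Longrightarrow> x \<noteq> p \<Longrightarrow> (norm (x - p))^2 * (V t \<bullet> V t) \<le> 4 * (x \<bullet> V t)^2"
    proof -
      fix x assume "x \<in> A" "x \<noteq> p"
      moreover have "V t \<bullet> p = 0" by (simp add: V_def inner_add_left up zp)
      ultimately show "(norm (x - p))^2 * (V t \<bullet> V t) \<le> 4 * (x \<bullet> V t)^2"
        using H that by blast
    qed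
    show "V t \<bullet> p = 0" "V (t + 1/4) \<bullet> p = 0" by (simp_all add: V_def inner_add_left up zp)
    show "\<forall>x\<in>A. 0 \<le> x \<bullet> V t" by (rule that)
    have vv: "V t \<bullet> V t = (1-t)^2 + t^2"
      by (simp add: V_def inner_add_left inner_add_right uu zz uz inner_commute power2_eq_square)
    have VV: "V r \<bullet> V r' = (1-r)*(1-r') + r*r'" for r r'
      by (simp add: V_def inner_add_left inner_add_right uu zz uz inner_commute algebra_simps)
    have dd: "(V (t + 1/4) - V t) \<bullet> (V (t + 1/4) - V t) = 1/8"
      by (simp add: inner_diff_left inner_diff_right VV algebra_simps)
    have "(1-t)^2 + t^2 - 1/2 = 2*(t-1/2)^2" by (simp add: power2_eq_square algebra_simps)
    hence "(1-t)^2 + t^2 \<ge> (1/2::real)" by (smt (verit) zero_le_power2)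
    hence "(norm (V (t + 1/4) - V t))^2 \<le> (norm (V t) / 2)^2"
      by (simp add: power2_norm_eq_inner dd power_divide vv)
    thus "norm (V (t + 1/4) - V t) \<le> norm (V t) / 2"
      by (rule power2_le_imp_le) simp
  qed
  have "\<forall>x\<in>A. 0 \<le> x \<bullet> V 0" using uA by (simp add: V_def)
  hence "\<forall>x\<in>A. 0 \<le> x \<bullet> V (0 + 1/4)" by (rule step)
  hence "\<forall>x\<in>A. 0 \<le> x \<bullet> V (0 + 1/4 + 1/4)" by (rule step)
  hence "\<forall>x\<in>A. 0 \<le> x \<bullet> V (0 + 1/4 + 1/4 + 1/4)" by (rule step)
  hence "\<forall>x\<in>A. 0 \<le> x \<bullet> V (0 + 1/4 + 1/4 + 1/4 + 1/4)" by (rule step)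
  thus ?thesis by (simp add: V_def)
qed


lemma touching:
  fixes A :: "(real^'n) set" and p e :: "real^'n"
  assumes card: "CARD('n) \<ge> 3" and pA: "p \<in> A" and e0: "e \<noteq> 0" and ep: "e \<bullet> p = 0"
    and eA: "\<forall>x\<in>A. 0 \<le> x \<bullet> e" and other: "\<exists>x\<in>A. x \<noteq> p"
  shows "\<exists>e1 q. q \<in> A \<and> q \<noteq> p \<and> e1 \<bullet> p = 0 \<and> (\<forall>x\<in>A. 0 \<le> x \<bullet> e1) \<and>
               (norm (q - p))^2 * (e1 \<bullet> e1) > 4 * (q \<bullet> e1)^2"
proof (rule ccontr)
  assume "\<not> ?thesis"
  hence H: "\<And>x v. x \<in> A \<Longrightarrow> x \<noteq> p \<Longrightarrow> v \<bullet> p = 0 \<Longrightarrow> (\<forall>y\<in>A. 0 \<le> y \<bullet> v) \<Longrightarrow> (norm (x - p))^2 * (v \<bullet> v) \<le> 4 * (x \<bullet> v)^2"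
    using not_less by blast
  define u where "u = (1 / norm e) *\<^sub>R e"
  have uu: "u \<bullet> u = 1" using e0 by (simp add: u_def power2_norm_eq_inner[symmetric] power2_eq_square)
  have up: "u \<bullet> p = 0" using ep by (simp add: u_def)
  have uA: "\<forall>x\<in>A. 0 \<le> x \<bullet> u" using eA by (simp add: u_def)
  have "dim {p, u} \<le> card {p, u}" by (rule dim_le_card) (auto intro: span_base)
  also have "\<dots> \<le> 2" by (simp add: card_insert_le_m1)
  also have "\<dots> < DIM(real^'n)" using card by simp
  finally obtain z0 where z0: "z0 \<noteq> 0" "\<And>y. y \<in> span {p, u} \<Longrightarrow> orthogonal z0 y"
    using orthogonal_to_subspace_exists by blast
  define z where "z = (1 / norm z0) *\<^sub>R z0"
  have zz: "z \<bullet> z = 1" using z0 by (simp add: z_def power2_norm_eq_inner[symmetric] power2_eq_square)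
  have "z0 \<bullet> p = 0" "z0 \<bullet> u = 0" using z0(2)[of p] z0(2)[of u] by (auto simp: orthogonal_def span_base)
  hence zp: "z \<bullet> p = 0" and zu: "z \<bullet> u = 0" by (simp_all add: z_def)
  have uz: "u \<bullet> z = 0" using zu by (simp only: inner_commute)
  have zA: "\<forall>x\<in>A. 0 \<le> x \<bullet> z"
    by (rule cone_path[OF H up zp uu zz uz uA])
  have zmu: "z \<bullet> (- u) = 0" using zu by simp
  have mup: "(- u) \<bullet> (- u) = 1" "(-u) \<bullet> p = 0" using uu up by simp_all
  have mA: "\<forall>x\<in>A. 0 \<le> x \<bullet> (- u)"
    by (rule cone_path[OF H zp mup(2) zz mup(1) zmu zA])
  obtain x where xA: "x \<in> A" and xp: "x \<noteq> p" using other by blast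
  have "0 \<le> x \<bullet> u" "0 \<le> x \<bullet> (-u)" using uA mA xA by auto
  hence "x \<bullet> u = 0" by simp
  hence "(norm (x - p))^2 \<le> 0" using H[OF xA xp up uA] uu by simp
  hence "x = p" by simp
  with xp show False by simp
qed



theorem theorem2p1:
  fixes A :: "(real^'n) set"
  assumes "CARD('n) \<ge> 3"
    and "A \<subseteq> unit_sphere"
    and "closed A"
    and "0 < diameter A" and "diameter A \<le> 1"
  shows "\<exists>f \<in> SO.
           A \<inter> f ` A \<noteq> {} \<and> A \<inter> (f \<circ> f) ` A \<noteq> {} \<and>
           f ` A \<inter> (f \<circ> f) ` A \<noteq> {} \<and>
           A \<inter> f ` A \<inter> (f \<circ> f) ` A = {}"
proof -
  note card = assms(1)
  have unit: "\<And>x. x \<in> A \<Longrightarrow> norm x = 1" using assms(2) by (auto simp: unit_sphere_def)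
  have unit2: "\<And>x. x \<in> A \<Longrightarrow> x \<bullet> x = 1" using unit by (simp add: norm_eq_1)
  have bdd: "bounded A" unfolding bounded_iff using unit by (intro exI[of _ 1]) simp
  have cpt: "compact A" using bdd assms(3) by (simp add: compact_eq_bounded_closed)
  obtain x1 x2 where x1: "x1 \<in> A" and x2: "x2 \<in> A" and x12: "x1 \<noteq> x2"
  proof -
    have "A \<noteq> {}" using assms(4) by (metis diameter_empty less_irrefl)
    then obtain x1 where x1: "x1 \<in> A" by blast
    show thesis
    proof (cases "\<exists>x2\<in>A. x1 \<noteq> x2")
      case True thus ?thesis using x1 that by blast
    next
      case False
      hence "\<forall>x\<in>A. x = x1" by metis
      hence "A \<subseteq> {x1}" by blast
      hence "A = {x1}" using x1 by blast
      thus ?thesis using assms(4) by simp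
    qed
  qed
  define p0 where "p0 = x1"
  have near: "\<And>x y. x \<in> A \<Longrightarrow> y \<in> A \<Longrightarrow> x \<bullet> y \<ge> 1/2"
  proof -
    fix x y assume xA: "x \<in> A" and yA: "y \<in> A"
    have "dist x y \<le> 1" using diameter_bounded_bound[OF bdd xA yA] assms(5) by linarith
    hence "(norm (x - y))^2 \<le> 1" unfolding dist_norm by (rule power_le_one[OF norm_ge_zero])
    moreover have "(norm (x - y))^2 = 2 - 2 * (x \<bullet> y)"
      by (simp add: power2_norm_eq_inner inner_diff_left inner_diff_right unit2 xA yA inner_commute)
    ultimately show "x \<bullet> y \<ge> 1/2" by simp
  qed
  have cont: "continuous_on A (\<lambda>x. x \<bullet> p0)" by (intro continuous_intros)
  obtain p where pA: "p \<in> A" and pmin: "\<And>y. y \<in> A \<Longrightarrow> p \<bullet> p0 \<le> y \<bullet> p0"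
    using continuous_attains_inf[OF cpt _ cont] x1 by blast
  define c where "c = p \<bullet> p0"
  have c_half: "c \<ge> 1/2" unfolding c_def using near[OF pA x1] by (simp add: p0_def)
  define e where "e = p0 - c *\<^sub>R p"
  have ep: "e \<bullet> p = 0" unfolding e_def c_def by (simp add: inner_diff_left unit2[OF pA] inner_commute[of p0 p])
  have eA: "\<forall>x\<in>A. 0 \<le> x \<bullet> e"
  proof
    fix x assume xA: "x \<in> A"
    have "x \<bullet> p \<le> norm x * norm p" by (rule norm_cauchy_schwarz)
    hence "x \<bullet> p \<le> 1" using unit xA pA by simp
    hence "c * (x \<bullet> p) \<le> c" using c_half by (simp add: mult_left_le)
    moreover have "c \<le> x \<bullet> p0" using pmin[OF xA] by (simp add: c_def)
    ultimately show "0 \<le> x \<bullet> e" by (simp add: e_def inner_diff_right)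
  qed
  have other: "\<exists>x\<in>A. x \<noteq> p" using x1 x2 x12 by metis
  have e0: "e \<noteq> 0"
  proof
    assume "e = 0"
    hence pe: "p0 = c *\<^sub>R p" by (simp add: e_def)
    hence "norm p0 = \<bar>c\<bar>" using unit[OF pA] by simp
    hence "c = 1" using unit[OF x1] c_half by (simp add: p0_def)
    hence "p0 = p" using pe by simp
    have "\<forall>x\<in>A. x = p"
    proof
      fix x assume xA: "x \<in> A"
      have "1 \<le> x \<bullet> p" using pmin[OF xA] \<open>p0 = p\<close> unit2[OF pA] by simp
      moreover have "(norm (x - p))^2 = 2 - 2 * (x \<bullet> p)"
        by (simp add: power2_norm_eq_inner inner_diff_left inner_diff_right unit2 xA pA inner_commute)
      moreover have "(norm (x - p))^2 \<ge> 0" by simp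
      ultimately have "(norm (x - p))^2 = 0" by linarith
      thus "x = p" by simp
    qed
    with other show False by blast
  qed
  obtain e1 q where qA: "q \<in> A" and qp: "q \<noteq> p" and e1p: "e1 \<bullet> p = 0"
      and e1A: "\<forall>x\<in>A. 0 \<le> x \<bullet> e1" and big: "(norm (q - p))^2 * (e1 \<bullet> e1) > 4 * (q \<bullet> e1)^2"
    using touching[OF card pA e0 ep eA other] by blast
  define E where "E t = (1 - t) *\<^sub>R p0 + t *\<^sub>R e1" for t :: real
  define G where "G t = (norm (p - q))^2 * (E t \<bullet> E t) - 3 * (p \<bullet> E t + q \<bullet> E t)^2 - (p \<bullet> E t - q \<bullet> E t)^2" for t
  have G1: "G 1 > 0"
  proof -
    have "p \<bullet> e1 = 0" using e1p by (simp add: inner_commute)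
    moreover have "norm (p - q) = norm (q - p)" by (rule norm_minus_commute)
    ultimately show ?thesis using big by (simp add: G_def E_def)
  qed
  have G0: "G 0 < 0"
  proof -
    have a: "p \<bullet> p0 \<ge> 1/2" "q \<bullet> p0 \<ge> 1/2" using near[OF pA x1] near[OF qA x1] by (simp_all add: p0_def)
    have "dist p q \<le> 1" using diameter_bounded_bound[OF bdd pA qA] assms(5) by linarith
    hence "(norm (p - q))^2 \<le> 1" unfolding dist_norm by (rule power_le_one[OF norm_ge_zero])
    moreover have pp0: "p0 \<bullet> p0 = 1" using unit2[OF x1] by (simp add: p0_def)
    have s1: "1 \<le> p \<bullet> p0 + q \<bullet> p0" using a by linarith
    have s2: "1 \<le> (p \<bullet> p0 + q \<bullet> p0)^2" by (rule one_le_power[OF s1])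
    have "G 0 = (norm (p - q))^2 - 3 * (p \<bullet> p0 + q \<bullet> p0)^2 - (p \<bullet> p0 - q \<bullet> p0)^2"
      by (simp add: G_def E_def pp0)
    moreover have "0 \<le> (p \<bullet> p0 - q \<bullet> p0)^2" by (rule zero_le_power2)
    ultimately show ?thesis using s2 by linarith
  qed
  have contG: "continuous_on {0..1} G"
    unfolding G_def E_def by (intro continuous_intros)
  obtain t where t0: "0 \<le> t" and t1: "t \<le> 1" and Gt: "G t = 0"
    using IVT'[of G 0 0 1, OF _ _ _ contG] G0 G1 by auto
  have tl1: "t < 1" using t1 Gt G1 by (cases "t = 1") auto
  define e' where "e' = E t"
  have pos: "\<And>x. x \<in> A \<Longrightarrow> x \<bullet> e' > 0"
  proof -
    fix x assume xA: "x \<in> A"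
    have "x \<bullet> p0 \<ge> 1/2" using near[OF xA x1] by (simp add: p0_def)
    hence "(1 - t) * (x \<bullet> p0) > 0" using tl1 by simp
    moreover have "t * (x \<bullet> e1) \<ge> 0" using t0 e1A xA by simp
    ultimately show "x \<bullet> e' > 0" by (simp add: e'_def E_def inner_add_right)
  qed
  have "(norm (p - q))^2 * (e' \<bullet> e') = 3 * (p \<bullet> e' + q \<bullet> e')^2 + (p \<bullet> e' - q \<bullet> e')^2"
    using Gt by (simp add: G_def e'_def)
  moreover have "p \<bullet> e' + q \<bullet> e' > 0" using pos[OF pA] pos[OF qA] by simp
  ultimately obtain f where fSO: "f \<in> SO" and fpq: "f p = q" and f3: "\<forall>x. f (f (f x)) = x"
      and fsum: "\<forall>x. e' \<bullet> x + e' \<bullet> f x + e' \<bullet> f (f x) = 0"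
    using rot_exists[OF unit[OF pA] unit[OF qA] qp[symmetric]] by blast
  have "q \<in> A \<inter> f ` A" using qA pA fpq by (metis IntI image_eqI)
  hence c1: "A \<inter> f ` A \<noteq> {}" by (metis empty_iff)
  have "p = (f \<circ> f) q" using f3 fpq by (metis comp_apply)
  hence "p \<in> A \<inter> (f \<circ> f) ` A" using pA qA by (metis IntI image_eqI)
  hence c2: "A \<inter> (f \<circ> f) ` A \<noteq> {}" by (metis empty_iff)
  have "f q = (f \<circ> f) p" using fpq by simp
  hence "f q \<in> f ` A \<inter> (f \<circ> f) ` A" using pA qA by (metis IntI image_eqI)
  hence c3: "f ` A \<inter> (f \<circ> f) ` A \<noteq> {}" by (metis empty_iff)
  have c4: "A \<inter> f ` A \<inter> (f \<circ> f) ` A = {}"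
  proof (rule ccontr)
    assume "A \<inter> f ` A \<inter> (f \<circ> f) ` A \<noteq> {}"
    then obtain z where z: "z \<in> A \<inter> f ` A \<inter> (f \<circ> f) ` A" by (metis equals0I)
    hence zA: "z \<in> A" by (metis IntD1)
    from z obtain y1 where y1: "y1 \<in> A" "z = f y1" by (metis IntD1 IntD2 imageE)
    from z obtain y2 where y2: "y2 \<in> A" "z = f (f y2)" by (metis IntD2 imageE comp_apply)
    have "f (f z) = y1" using y1 f3 by simp
    hence fz2: "f (f z) \<in> A" using y1 by simp
    have "f z = y2" using y2 f3 by simp
    hence fz: "f z \<in> A" using y2 by simp
    have "e' \<bullet> z > 0" "e' \<bullet> f z > 0" "e' \<bullet> f (f z) > 0"
      using pos[OF zA] pos[OF fz] pos[OF fz2] by (simp_all add: inner_commute)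
    hence "e' \<bullet> z + e' \<bullet> f z + e' \<bullet> f (f z) > 0" by linarith
    thus False using fsum by simp
  qed
  show ?thesis using fSO c1 c2 c3 c4 by (metis (no_types, lifting))
qed


end
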